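(* Let $0<c_1,c_2<1$ and $0<\eta\le1$ be constants and let $m$ be a sufficiently large integer. Let $H$ be a $3$-uniform hypergraph whose vertex set is the disjoint union of sets $A$ and $B$, such that every edge of $H$ contains exactly one vertex of $A$ and two vertices of $B$, with $|A|=c_1 m$ and $|B|\geq c_2 2^{m^2}$. If $d_3\left(A,\binom{B}{2}\right)\geq\eta$, then there exists a complete $3$-partite $3$-uniform hypergraph $H'(A',B',B'')$ contained in $H$, with $A'\subseteq A$, $B'$ and $B''$ disjoint subsets of $B$, and $|A'|=|B'|=|B''|=\eta|A|/2$.
   Context: $d_3\left(A,\binom{B}{2}\right)$ denotes the number of edges of $H$ (each consisting of one vertex of $A$ and a pair from $B$) divided by $|A|\binom{|B|}{2}$. A complete $3$-partite $3$-graph $H'(A',B',B'')$ contains every triple with one vertex in each of $A',B',B''$. *)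

theory Defs
  imports Complex_Main
begin

definition AB_3graph :: "'a set set \<Rightarrow> 'a set \<Rightarrow> 'a set \<Rightarrow> bool" where
  "AB_3graph H A B \<longleftrightarrow> A \<inter> B = {} \<and>
     (\<forall>e\<in>H. e \<subseteq> A \<union> B \<and> card e = 3 \<and> card (e \<inter> A) = 1 \<and> card (e \<inter> B) = 2)"

definition d3 :: "'a set set \<Rightarrow> 'a set \<Rightarrow> 'a set \<Rightarrow> real" where
  "d3 H A B = real (card H) / (real (card A) * real (card B choose 2))"

definition contains_complete_3partite :: "'a set set \<Rightarrow> 'a set \<Rightarrow> 'a set \<Rightarrow> 'a set \<Rightarrow> bool" where
  "contains_complete_3partite H A' B' B'' \<longleftrightarrow>
     (\<forall>a\<in>A'. \<forall>b\<in>B'. \<forall>b'\<in>B''. {a, b, b'} \<in> H)"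

end

theory Submission
  imports Defs
begin


lemma kst:
  fixes E :: "('a \<times> 'a) set" and B :: "'a set"
  assumes fin: "finite B" and EB: "E \<subseteq> B \<times> B" and irr: "\<forall>x. (x,x) \<notin> E" and t: "1 \<le> t"
    and V: "D \<le> card {y\<in>B. D \<le> card {x\<in>B. (x,y)\<in>E}}"
    and big: "(t-1) * (card B choose t) < D * (D choose t)"
  shows "\<exists>T U. T \<subseteq> B \<and> U \<subseteq> B \<and> T \<inter> U = {} \<and> card T = t \<and> card U = t \<and>
           (\<forall>x\<in>T. \<forall>y\<in>U. (x,y)\<in>E)"
proof -
  define I where "I y = {x\<in>B. (x,y)\<in>E}" for y
  define TT where "TT = {T. T \<subseteq> B \<and> card T = t}"
  define V' where "V' = {y\<in>B. D \<le> card (I y)}"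
  have finTT: "finite TT" unfolding TT_def using fin by (auto intro: finite_subset[of _ "Pow B"])
  have finI: "finite (I y)" for y unfolding I_def using fin by auto
  have "D * (D choose t) \<le> card V' * (D choose t)" using V unfolding V'_def I_def by simp
  also have "\<dots> = (\<Sum>y\<in>V'. D choose t)" by simp
  also have "\<dots> \<le> (\<Sum>y\<in>V'. card (I y) choose t)"
    by (rule sum_mono) (auto simp: V'_def intro: binomial_right_mono)
  also have "\<dots> \<le> (\<Sum>y\<in>B. card (I y) choose t)"
    by (rule sum_mono2) (use fin in \<open>auto simp: V'_def\<close>)
  also have "\<dots> = (\<Sum>y\<in>B. card {T\<in>TT. T \<subseteq> I y})"
  proof (rule sum.cong[OF refl])
    fix y assume "y \<in> B"
    have "{T\<in>TT. T \<subseteq> I y} = {T. T \<subseteq> I y \<and> card T = t}"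
      unfolding TT_def I_def by auto
    then show "card (I y) choose t = card {T\<in>TT. T \<subseteq> I y}"
      using n_subsets[OF finI] by simp
  qed
  also have "\<dots> = (\<Sum>y\<in>B. \<Sum>T\<in>TT. if T \<subseteq> I y then 1 else 0)"
    by (rule sum.cong[OF refl]) (simp add: sum.If_cases finTT Int_def)
  also have "\<dots> = (\<Sum>T\<in>TT. \<Sum>y\<in>B. if T \<subseteq> I y then 1 else 0)"
    by (rule sum.swap)
  also have "\<dots> = (\<Sum>T\<in>TT. card {y\<in>B. T \<subseteq> I y})"
    by (rule sum.cong[OF refl]) (simp add: sum.If_cases fin Int_def)
  finally have S: "D * (D choose t) \<le> (\<Sum>T\<in>TT. card {y\<in>B. T \<subseteq> I y})" .
  have "\<exists>T\<in>TT. t \<le> card {y\<in>B. T \<subseteq> I y}"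
  proof (rule ccontr)
    assume "\<not> ?thesis"
    then have "\<forall>T\<in>TT. card {y\<in>B. T \<subseteq> I y} \<le> t - 1" by auto
    then have "(\<Sum>T\<in>TT. card {y\<in>B. T \<subseteq> I y}) \<le> (\<Sum>T\<in>TT. t - 1)"
      by (intro sum_mono) auto
    also have "\<dots> = (t - 1) * (card B choose t)"
      using n_subsets[OF fin, of t] unfolding TT_def by simp
    finally show False using S big by linarith
  qed
  then obtain T where T: "T \<in> TT" "t \<le> card {y\<in>B. T \<subseteq> I y}" by blast
  then obtain U where U: "U \<subseteq> {y\<in>B. T \<subseteq> I y}" "card U = t"
    by (meson obtain_subset_with_card_n)
  have "T \<inter> U = {}"
  proof (rule ccontr)
    assume "T \<inter> U \<noteq> {}"
    then obtain z where "z \<in> T" "z \<in> U" by blast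
    then have "z \<in> I z" using U by auto
    then show False using irr unfolding I_def by auto
  qed
  moreover have "\<forall>x\<in>T. \<forall>y\<in>U. (x,y)\<in>E" using U unfolding I_def by auto
  ultimately show ?thesis using T U unfolding TT_def by (intro exI[of _ T] exI[of _ U]) auto
qed


lemma numeric:
  fixes r t n D :: nat
  assumes r: "1 \<le> r" and t: "1 \<le> t" and n: "(8*r*t)^(t+1) \<le> n" and D: "D = n div (4*r)"
  shows "(t-1) * (n choose t) < D * (D choose t)"
proof -
  have "8*r*t \<le> (8*r*t)^(t+1)"
    using r t by (intro self_le_power) auto
  with n have n8: "8*r*t \<le> n" by linarith
  have rp: "real r > 0" using r by simp
  have "real D \<ge> real n / (4*r) - 1"
  proof -
    have "real (n div (4*r)) * (4*r) \<ge> real n - (4*r)"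
    proof -
      have "n = n div (4*r) * (4*r) + n mod (4*r)" by (rule div_mult_mod_eq[symmetric])
      moreover have "n mod (4*r) < 4*r" using r by simp
      ultimately have "n \<le> n div (4*r) * (4*r) + 4*r" by linarith
      then have "real n \<le> real (n div (4*r) * (4*r)) + 4*r" by linarith
      then show ?thesis by simp
    qed
    then show ?thesis using D rp by (simp add: field_simps)
  qed
  moreover have "real n / (4*r) - 1 \<ge> real n / (8*r)"
  proof -
    have "real n \<ge> 8*r" using n8 t by (metis mult_le_mono2 mult.commute nat_mult_1 of_nat_le_iff order_trans le_add1 of_nat_mult of_nat_numeral) 
    then show ?thesis using rp by (simp add: field_simps)
  qed
  ultimately have Dn: "real D \<ge> real n / (8*r)" by linarith
  have nbig: "real n \<ge> (8*r*t)^(t+1)" using n by (metis of_nat_le_iff of_nat_power of_nat_mult of_nat_numeral)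
  have tD: "t \<le> D"
  proof -
    have "real (8*r*t) \<le> real n" using n8 by (simp only: of_nat_le_iff)
    then have "real n / (8*r) \<ge> t" using rp by (simp add: field_simps)
    then show ?thesis using Dn by linarith
  qed
  have "t \<le> 8*r*t" using r by simp
  then have tn: "t \<le> n" using n8 by linarith
  have "real D * (real D / t)^t \<le> real D * real (D choose t)"
    using binomial_ge_n_over_k_pow_k[OF tD] by (intro mult_left_mono) auto
  moreover have "real t * real n ^ t \<le> real D * (real D / t)^t"
  proof -
    have "real D * (real D / t)^t = real D^(t+1) / real t^t" by (simp add: power_divide)
    moreover have "real D^(t+1) \<ge> (real n / (8*r))^(t+1)"
      using Dn rp by (intro power_mono) auto
    moreover have "(real n / (8*r))^(t+1) / real t^t \<ge> real t * real n ^ t"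
    proof -
      have tp: "real t > 0" using t by simp
      have "(real n / (8*r))^(t+1) / real t^t = real n ^ t * real n / ((8*r)^(t+1) * t^t)"
        by (simp add: power_divide field_simps)
      also have "\<dots> \<ge> real n ^ t * ((8*r*t)^(t+1)) / ((8*r)^(t+1) * t^t)"
        using nbig rp tp by (intro divide_right_mono mult_left_mono) auto
      also have "real n ^ t * ((8*r*t)^(t+1)) / ((8*r)^(t+1) * t^t) = real t * real n ^ t"
        using rp tp by (simp add: power_mult_distrib field_simps)
      finally show ?thesis .
    qed
    moreover have "real t > 0" using t by simp
    ultimately show ?thesis by (smt (verit) divide_right_mono zero_le_power of_nat_0_le_iff)
  qed
  moreover have "real (n choose t) \<le> real n ^ t" using binomial_le_pow[OF tn] by (metis of_nat_le_iff of_nat_power)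
  moreover have "0 < n choose t" using tn by simp
  ultimately have "real t * real (n choose t) \<le> real D * real (D choose t)"
    by (smt (verit) mult_left_mono of_nat_0_le_iff)
  then have "t * (n choose t) \<le> D * (D choose t)" by (metis of_nat_le_iff of_nat_mult)
  moreover have "(t-1) * (n choose t) < t * (n choose t)" using t \<open>0 < n choose t\<close> by simp
  ultimately show ?thesis by linarith
qed


lemma asym:
  fixes m k t n :: nat and c2 :: real
  assumes h1: "512*real m^4 \<le> 2^m" and h2: "1 \<le> c2^2 * 2^m" and c2: "c2 > 0" and m2: "2 \<le> m"
    and t: "1 \<le> t" and tk: "2*t \<le> k" and km: "k \<le> m" and nB: "c2 * 2^(m^2) \<le> real n"
  shows "(8*(k*2^k)*t)^(t+1) \<le> n"
proof -
  define X where "X = real (8*(k*2^k)*t)"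
  define Y where "Y = 8 * real m^2 * 2^m"
  have tm: "t \<le> m" using tk km by linarith
  have k1: "1 \<le> k" using t tk by linarith
  have X1: "1 \<le> X" unfolding X_def using t k1
    by (metis le_add2 mult_le_mono nat_mult_1 numeral_Bit0 numeral_One of_nat_1 of_nat_le_iff one_le_numeral one_le_power one_add_one)
  have XY: "X \<le> Y"
  proof -
    have "real k * 2^k \<le> real m * 2^m" using km
      by (intro mult_mono) (auto intro: power_increasing)
    moreover have "real t \<le> real m" using tm by simp
    ultimately have "8 * (real k * 2^k) * real t \<le> 8 * (real m * 2^m) * real m"
      using km by (intro mult_mono) auto
    then show ?thesis unfolding X_def Y_def using km by (simp add: power2_eq_square field_simps)
  qed
  have "X^(2*(t+1)) \<le> X^(m+2)" using X1 tk km by (intro power_increasing) auto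
  also have "\<dots> \<le> Y^(m+2)" using XY X1 by (intro power_mono) auto
  also have "\<dots> = (8 * real m^2)^(m+2) * 2^(m*m) * 4^m"
  proof -
    have f4: "(2::real)^m*2^m = 4^m" by (simp flip: power_mult_distrib)
    show ?thesis
    unfolding Y_def using f4 by (simp add: power_mult_distrib power_add power_mult[symmetric] algebra_simps)
  qed
  also have "(8 * real m^2)^(m+2) \<le> (8 * real m^2)^(2*m)"
  proof -
    have "1 \<le> real m" using m2 by simp
    then have "1 \<le> real m^2" by (simp add: one_le_power)
    then have "1 \<le> 8 * real m^2" by linarith
    then show ?thesis using m2 by (intro power_increasing) auto
  qed
  then have "(8 * real m^2)^(m+2) * 2^(m*m) * 4^m \<le> (8 * real m^2)^(2*m) * 2^(m*m) * 4^m"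
    by (intro mult_right_mono) auto
  also have "(8 * real m^2)^(2*m) * 2^(m*m) * 4^m = (256 * real m^4)^m * 2^(m*m)"
  proof -
    have "(8 * real m^2)^(2*m) * 4^m = ((8 * real m^2)^2 * 4)^m"
      by (simp only: power_mult flip: power_mult_distrib)
    also have "(8 * real m^2)^2 * 4 = 256 * real m^4" by (simp add: power2_eq_square power4_eq_xxxx)
    finally show ?thesis by simp
  qed
  also have "\<dots> \<le> (2^m / 2)^m * 2^(m*m)"
    using h1 by (intro mult_right_mono power_mono) auto
  also have "\<dots> = 2^(2*(m*m)) / 2^m"
    by (simp add: power_divide power_mult[symmetric] field_simps flip: power_add)
  also have "\<dots> \<le> (c2 * 2^(m^2))^2"
  proof -
    have ff: "(2::real)^(m*m)*2^(m*m) = 2^(m*(m*2))" by (simp flip: power_add add: algebra_simps)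
    have "(c2 * 2^(m^2))^2 = c2^2 * 2^m * (2^(2*(m*m)) / 2^m)"
      using ff by (simp add: power_mult_distrib power_mult[symmetric] power2_eq_square field_simps)
    moreover have "2^(2*(m*m)) / 2^m \<le> c2^2 * 2^m * (2^(2*(m*m)) / 2^m)"
      using h2 mult_right_mono[OF h2, of "2^(2*(m*m)) / 2^m"] by simp
    ultimately show ?thesis by simp
  qed
  also have "\<dots> \<le> (real n)^2" using nB c2 by (intro power_mono) auto
  finally have "X^(2*(t+1)) \<le> (real n)^2" .
  moreover have "X^(2*(t+1)) = (X^(t+1))^2" by (simp only: power_mult[symmetric] mult.commute)
  ultimately have "(X^(t+1))^2 \<le> (real n)^2" by simp
  then have "X^(t+1) \<le> real n" by (rule power2_le_imp_le) simp
  then show ?thesis unfolding X_def by (metis of_nat_le_iff of_nat_power)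
qed


lemma degree:
  fixes E :: "('a \<times> 'a) set" and B :: "'a set"
  assumes fin: "finite B" and EB: "E \<subseteq> B \<times> B" and r: "1 \<le> r" and nk: "2*k \<le> card B"
    and dens: "real (card B) * (real (card B) - real k) \<le> real (card E) * real r"
    and D: "D = card B div (4*r)"
  shows "D \<le> card {y\<in>B. D \<le> card {x\<in>B. (x,y)\<in>E}}"
proof -
  define n where "n = card B"
  define I where "I y = {x\<in>B. (x,y)\<in>E}" for y
  define V where "V = {y\<in>B. D \<le> card (I y)}"
  have finI: "finite (I y)" for y unfolding I_def using fin by auto
  have "E = (\<lambda>(y,x). (x,y)) ` Sigma B I" unfolding I_def using EB by (auto simp: image_iff)
  moreover have "inj_on (\<lambda>(y,x). (x,y)) (Sigma B I)" by (auto simp: inj_on_def)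
  ultimately have "card E = card (Sigma B I)" by (simp add: card_image)
  also have "\<dots> = (\<Sum>y\<in>B. card (I y))" using fin finI by (simp add: card_SigmaI)
  also have "\<dots> = (\<Sum>y\<in>V. card (I y)) + (\<Sum>y\<in>B-V. card (I y))"
    using fin by (metis (no_types, lifting) V_def add.commute mem_Collect_eq subsetI sum.subset_diff)
  also have "(\<Sum>y\<in>V. card (I y)) \<le> (\<Sum>y\<in>V. n)"
    by (rule sum_mono) (auto simp: n_def I_def intro: card_mono fin)
  also have "(\<Sum>y\<in>B-V. card (I y)) \<le> (\<Sum>y\<in>B-V. D)"
    by (rule sum_mono) (auto simp: V_def)
  finally have cE: "card E \<le> card V * n + card (B-V) * D" by simp
  have "card (B - V) \<le> n" unfolding n_def using fin by (simp add: card_mono)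
  then have "card E \<le> card V * n + n * D" using cE
    by (metis add_le_mono le_refl mult.commute mult_le_mono1 order_trans)
  then have cE': "real (card E) \<le> real (card V) * n + n * D" by (metis of_nat_le_iff of_nat_add of_nat_mult)
  have rp: "real r > 0" using r by simp
  have D4: "real D * (4*r) \<le> n" unfolding D n_def
    by (metis div_mult_mod_eq le_add1 of_nat_le_iff of_nat_mult of_nat_numeral)
  show ?thesis
  proof (cases "n = 0")
    case True then have "D = 0" using D n_def by simp
    then show ?thesis by simp
  next
    case False then have np: "n > 0" by simp
  have "real n * (real n / 2) \<le> real n * (real n - k)" using nk unfolding n_def[symmetric]
    by (intro mult_left_mono) auto
  also have "\<dots> \<le> real (card E) * r" using dens n_def by simp
  also have "\<dots> \<le> (real (card V) * n + n * D) * r" using cE' rp by (intro mult_right_mono) auto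
  finally have X: "real n * (real n / 2) \<le> (real (card V) * n + n * D) * r" .
  have "real n * (real D * (4*r) / 2) \<le> real n * (real n / 2)"
    using D4 by (intro mult_left_mono) auto
  with X have "real n * (real D * (4*r) / 2) \<le> (real (card V) * n + n * D) * r" by linarith
  then have "real n * (real D * r) \<le> real n * (real (card V) * r)" by (simp add: algebra_simps)
  then have "real D * r \<le> real (card V) * r" using np by simp
  then have "real D \<le> real (card V)" using rp by simp
  then show ?thesis unfolding V_def I_def by simp
  qed
qed


lemma dens_alg: fixes \<eta> k n Q H C t :: real
  assumes "\<eta> * (k * C) \<le> H" "2*C = n*(n-1)" "H \<le> Q*k + n*n*(t-1)" "n*n*(t-1) \<le> n*n*(\<eta>*k/2-1)"
  shows "n*n - \<eta>*k*n/2 \<le> Q*k"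
proof -
  have "\<eta> * (k * C) = \<eta>*k*(2*C)/2" by simp
  also have "\<dots> = \<eta>*k*(n*(n-1))/2" using assms(2) by simp
  also have "\<dots> = \<eta>*k*n*n/2 - \<eta>*k*n/2" by (simp add: algebra_simps diff_divide_distrib)
  finally have "\<eta> * (k * C) = \<eta>*k*n*n/2 - \<eta>*k*n/2" .
  moreover have "n*n*(\<eta>*k/2-1) = \<eta>*k*n*n/2 - n*n" by (simp add: algebra_simps)
  ultimately show ?thesis using assms by linarith
qed

lemma pow4: "40 \<le> m \<Longrightarrow> 512 * m^4 \<le> (2::nat)^m"
proof (induction m rule: dec_induct)
  case base then show ?case by simp
next
  case (step m)
  have m1: "1 \<le> m" using step by simp
  have a: "m^2 \<le> m^3" "m \<le> m^3" "1 \<le> m^3" using m1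
    by (auto simp: power_increasing one_le_power)
    (metis One_nat_def le_add2 numeral_3_eq_3 one_le_numeral power_increasing power_one_right plus_1_eq_Suc)
  have "4*m^3+6*m^2+4*m+1 \<le> 15*m^3" using a by linarith
  also have "15*m^3 \<le> m*m^3" using step by simp
  also have "m*m^3 = m^4" by (simp add: power_Suc[symmetric] del: power_Suc)
  finally have b: "4*m^3+6*m^2+4*m+1 \<le> m^4" .
  have "(Suc m)^4 = m^4 + 4*m^3+6*m^2+4*m+1" by (simp add: power_Suc algebra_simps power2_eq_square power3_eq_cube eval_nat_numeral)
  then have "(Suc m)^4 \<le> 2 * m^4" using b by linarith
  then have "512 * (Suc m)^4 \<le> 2 * (512 * m^4)" by simp
  also have "\<dots> \<le> 2 * 2^m" using step by simp
  finally show ?case by simp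
qed

lemma two_choose: "2 * (n choose 2) = n * (n - 1)"
proof (induction n)
  case 0 show ?case by simp
next
  case (Suc n)
  have "Suc n choose 2 = n + (n choose 2)" by (simp add: numeral_2_eq_2)
  then show ?case using Suc by (cases n) (simp_all add: algebra_simps)
qed

theorem lemma5:
  fixes c1 c2 \<eta> :: real
  assumes "0 < c1" "c1 < 1" "0 < c2" "c2 < 1" "0 < \<eta>" "\<eta> \<le> 1"
  shows "\<exists>M::nat. \<forall>m\<ge>M. \<forall>(H :: 'a set set) A B.
     AB_3graph H A B \<and> finite A \<and> finite B \<and>
     card A = nat \<lfloor>c1 * real m\<rfloor> \<and>
     real (card B) \<ge> c2 * 2 ^ (m ^ 2) \<and>
     d3 H A B \<ge> \<eta>
     \<longrightarrow> (\<exists>A' B' B''. A' \<subseteq> A \<and> B' \<subseteq> B \<and> B'' \<subseteq> B \<and> B' \<inter> B'' = {} \<and>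
            card A' = nat \<lfloor>\<eta> * real (card A) / 2\<rfloor> \<and>
            card B' = nat \<lfloor>\<eta> * real (card A) / 2\<rfloor> \<and>
            card B'' = nat \<lfloor>\<eta> * real (card A) / 2\<rfloor> \<and>
            contains_complete_3partite H A' B' B'')"
proof -
  have c2sq: "c2^2 > 0" using assms by simp
  obtain N :: nat where N: "1 / c2^2 < real N" using reals_Archimedean2 by blast
  define M where "M = max 40 N"
  have MM: "512 * real m ^ 4 \<le> 2 ^ m \<and> 1 \<le> c2^2 * 2 ^ m \<and> 2 \<le> m" if "m \<ge> M" for m
  proof -
    have "512 * m^4 \<le> (2::nat)^m" using pow4 that unfolding M_def by simp
    then have "real (512 * m^4) \<le> real ((2::nat)^m)" by (simp only: of_nat_le_iff)
    then have A1: "512 * real m ^ 4 \<le> 2 ^ m" by simp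
    have "real N \<le> real m" using that unfolding M_def by simp
    also have "real m \<le> 2^m" using less_exp[of m] by (metis of_nat_le_iff of_nat_numeral of_nat_power less_imp_le)
    finally have "1 / c2^2 < 2^m" using N by linarith
    then have A2: "1 \<le> c2^2 * 2 ^ m" using c2sq by (simp add: divide_less_eq mult.commute)
    show ?thesis using A1 A2 that unfolding M_def by simp
  qed
  show ?thesis
  proof (intro exI[of _ M] allI impI)
    fix m :: nat and H :: "'a set set" and A B
    assume mM: "M \<le> m"
    assume hyp: "AB_3graph H A B \<and> finite A \<and> finite B \<and>
     card A = nat \<lfloor>c1 * real m\<rfloor> \<and> real (card B) \<ge> c2 * 2 ^ (m ^ 2) \<and> d3 H A B \<ge> \<eta>"
    from MM[OF mM] have h1: "512 * real m ^ 4 \<le> 2 ^ m" and h2: "1 \<le> c2^2 * 2 ^ m" and m2: "2 \<le> m"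
      by auto
    have AB: "AB_3graph H A B" and finA: "finite A" and finB: "finite B"
      and cA: "card A = nat \<lfloor>c1 * real m\<rfloor>" and nB: "real (card B) \<ge> c2 * 2 ^ (m ^ 2)"
      and dH: "d3 H A B \<ge> \<eta>" using hyp by auto
    define k where "k = card A"
    define n where "n = card B"
    define t where "t = nat \<lfloor>\<eta> * real (card A) / 2\<rfloor>"
    have km: "k \<le> m"
    proof -
      have "0 \<le> c1 * real m" using assms by simp
      then have "real k \<le> c1 * real m" unfolding k_def cA by linarith
      also have "\<dots> \<le> real m" using assms by (simp add: mult_left_le_one_le)
      finally show ?thesis by simp
    qed
    have "0 \<le> \<eta> * real (card A) / 2" using assms by simp
    then have tr: "real t \<le> \<eta> * real k / 2" unfolding t_def k_def by linarith
    have tk: "2 * t \<le> k"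
    proof -
      have "\<eta> * real k \<le> real k" using assms by (simp add: mult_left_le_one_le)
      then show ?thesis using tr by linarith
    qed
    show "\<exists>A' B' B''. A' \<subseteq> A \<and> B' \<subseteq> B \<and> B'' \<subseteq> B \<and> B' \<inter> B'' = {} \<and>
            card A' = nat \<lfloor>\<eta> * real (card A) / 2\<rfloor> \<and>
            card B' = nat \<lfloor>\<eta> * real (card A) / 2\<rfloor> \<and>
            card B'' = nat \<lfloor>\<eta> * real (card A) / 2\<rfloor> \<and>
            contains_complete_3partite H A' B' B''"
    proof (cases "t = 0")
      case True
      then show ?thesis unfolding t_def[symmetric]
        by (intro exI[of _ "{}"]) (auto simp: contains_complete_3partite_def)
    next
      case False
      then have t1: "1 \<le> t" by simp
      define Nf where "Nf x y = {a\<in>A. {a,x,y}\<in>H}" for x y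
      have finNf: "finite (Nf x y)" for x y unfolding Nf_def using finA by auto
      have cardNf: "card (Nf x y) \<le> k" for x y unfolding Nf_def k_def using finA by (intro card_mono) auto
      have Nfxx: "Nf x x = {}" for x
      proof -
        have c3: "\<forall>e\<in>H. card e = 3" using AB unfolding AB_3graph_def by blast
        have "{a,x,x} \<notin> H" for a
        proof -
          have "card {a,x,x} \<le> 2" by (simp add: card_insert_if)
          show ?thesis
          proof
            assume "{a,x,x} \<in> H"
            with c3 have "card {a,x,x} = 3" by blast
            with \<open>card {a,x,x} \<le> 2\<close> show False by simp
          qed
        qed
        then show ?thesis unfolding Nf_def by blast
      qed
      have denom: "real k * real (n choose 2) > 0"
      proof (rule ccontr)
        assume "\<not> ?thesis"
        moreover have "real k * real (n choose 2) \<ge> 0" by simp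
        ultimately have "real k * real (n choose 2) = 0" by linarith
        then have "d3 H A B = 0" unfolding d3_def k_def n_def by simp
        then show False using dH assms by simp
      qed
      have cardH: "\<eta> * (real k * real (n choose 2)) \<le> real (card H)"
        using dH denom unfolding d3_def k_def n_def by (simp add: field_simps)
      define X where "X = Sigma (B \<times> B) (\<lambda>q. Nf (fst q) (snd q))"
      have "H \<subseteq> (\<lambda>(q,a). {a, fst q, snd q}) ` X"
      proof
        fix e assume e: "e \<in> H"
        then have eAB: "e \<subseteq> A \<union> B" "card (e \<inter> A) = 1" "card (e \<inter> B) = 2"
          using AB unfolding AB_3graph_def by auto
        then obtain a where a: "e \<inter> A = {a}" using card_1_singletonE[OF eAB(2)] by blast
        from eAB obtain x y where xy: "x \<noteq> y" "e \<inter> B = {x,y}" using eAB(3) unfolding card_2_iff by blast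
        have "e = (e \<inter> A) \<union> (e \<inter> B)" using eAB by blast
        then have ee: "e = {a,x,y}" using a xy by auto
        have "((x,y),a) \<in> X" unfolding X_def Nf_def using a xy ee e by auto
        then show "e \<in> (\<lambda>(q,a). {a, fst q, snd q}) ` X" using ee by (auto intro!: image_eqI[where x="((x,y),a)"])
      qed
      moreover have finX: "finite X" unfolding X_def using finB finNf by auto
      ultimately have "card H \<le> card ((\<lambda>(q,a). {a, fst q, snd q}) ` X)"
        by (intro card_mono) auto
      also have "\<dots> \<le> card X" using finX by (rule card_image_le)
      finally have "card H \<le> card X" .
      also have "card X = (\<Sum>q\<in>B\<times>B. card (Nf (fst q) (snd q)))"
        unfolding X_def using finB finNf by (simp add: card_SigmaI)
      finally have sumH: "card H \<le> (\<Sum>q\<in>B\<times>B. card (Nf (fst q) (snd q)))" .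
      define Q where "Q = {q\<in>B\<times>B. t \<le> card (Nf (fst q) (snd q))}"
      have finBB: "finite (B \<times> B)" using finB by simp
      have "(\<Sum>q\<in>B\<times>B. card (Nf (fst q) (snd q)))
          = (\<Sum>q\<in>Q. card (Nf (fst q) (snd q))) + (\<Sum>q\<in>B\<times>B - Q. card (Nf (fst q) (snd q)))"
        using sum.subset_diff[of Q "B\<times>B"] finBB by (simp add: Q_def add.commute)
      also have "(\<Sum>q\<in>Q. card (Nf (fst q) (snd q))) \<le> (\<Sum>q\<in>Q. k)"
        by (rule sum_mono) (rule cardNf)
      also have "(\<Sum>q\<in>B\<times>B - Q. card (Nf (fst q) (snd q))) \<le> (\<Sum>q\<in>B\<times>B - Q. t - 1)"
        by (rule sum_mono) (auto simp: Q_def)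
      finally have "card H \<le> card Q * k + card (B\<times>B - Q) * (t - 1)" using sumH by simp
      moreover have "card (B\<times>B - Q) \<le> n * n" unfolding n_def
        using card_mono[OF finBB, of "B\<times>B - Q"] card_cartesian_product[of B B] by auto
      ultimately have "card H \<le> card Q * k + n * n * (t - 1)"
        using mult_le_mono1[of "card (B\<times>B - Q)" "n*n" "t-1"] by linarith
      then have "real (card H) \<le> real (card Q * k + n * n * (t - 1))" by (simp only: of_nat_le_iff)
      then have "real (card H) \<le> real (card Q) * k + real n * n * (real t - 1)"
        using t1 by (simp add: of_nat_diff)
      moreover have "real n * n * (real t - 1) \<le> real n * n * (\<eta> * real k / 2 - 1)"
        using tr by (intro mult_left_mono) auto
      moreover have "2 * real (n choose 2) = real n * (real n - 1)"
      proof (cases "n = 0")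
        case True then show ?thesis by simp
      next
        case False
        then have "real (2 * (n choose 2)) = real (n * (n - 1))" using two_choose[of n] by simp
        then show ?thesis using False by (simp add: of_nat_diff)
      qed
      ultimately have "real n * n - \<eta> * real k * n / 2 \<le> real (card Q) * k"
        using dens_alg[OF cardH] by blast
      moreover have "\<eta> * real k * n / 2 \<le> real k * n"
      proof -
        have "\<eta> * (real k * n) \<le> real k * n" using assms by (intro mult_left_le_one_le) auto
        moreover have "0 \<le> real k * n" by simp
        moreover have "\<eta> * real k * real n = \<eta> * (real k * real n)" by simp
        ultimately show ?thesis by linarith
      qed
      ultimately have Qk: "real n * (real n - k) \<le> real (card Q) * k" by (simp add: algebra_simps)
      define SS where "SS = {S. S \<subseteq> A \<and> card S = t}"
      define F where "F S = {q\<in>B\<times>B. S \<subseteq> Nf (fst q) (snd q)}" for S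
      have finSS: "finite SS" unfolding SS_def using finA by (auto intro: finite_subset[of _ "Pow A"])
      have SSne: "SS \<noteq> {}"
      proof -
        have "t \<le> card A" using tk k_def by simp
        then obtain S where "S \<subseteq> A" "card S = t" by (meson obtain_subset_with_card_n)
        then show ?thesis unfolding SS_def by auto
      qed
      have cSS: "card SS \<le> 2^k"
      proof -
        have "card SS \<le> card (Pow A)" using finA unfolding SS_def by (intro card_mono) auto
        then show ?thesis using finA k_def by (simp add: card_Pow)
      qed
      define MX where "MX = Max ((\<lambda>S. card (F S)) ` SS)"
      have "MX \<in> (\<lambda>S. card (F S)) ` SS" unfolding MX_def using finSS SSne by (intro Max_in) auto
      then obtain S0 where S0: "S0 \<in> SS" "card (F S0) = MX" by auto
      have maxF: "card (F S) \<le> card (F S0)" if "S \<in> SS" for S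
        using S0 that finSS unfolding MX_def by auto
      have finF: "finite (F S)" for S unfolding F_def using finBB by auto
      have "Q \<subseteq> (\<Union>S\<in>SS. F S)"
      proof
        fix q assume "q \<in> Q"
        then have "t \<le> card (Nf (fst q) (snd q))" "q \<in> B\<times>B" unfolding Q_def by auto
        then obtain S where "S \<subseteq> Nf (fst q) (snd q)" "card S = t" by (meson obtain_subset_with_card_n)
        then show "q \<in> (\<Union>S\<in>SS. F S)" using \<open>q \<in> B\<times>B\<close> unfolding SS_def F_def Nf_def by auto
      qed
      then have "card Q \<le> card (\<Union>S\<in>SS. F S)" using finSS finF by (intro card_mono) auto
      also have "\<dots> \<le> (\<Sum>S\<in>SS. card (F S))" by (rule card_UN_le[OF finSS])
      also have "\<dots> \<le> (\<Sum>S\<in>SS. card (F S0))" by (rule sum_mono) (rule maxF)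
      also have "\<dots> = card SS * card (F S0)" by simp
      also have "\<dots> \<le> 2^k * card (F S0)" using cSS by simp
      finally have QF: "card Q \<le> 2^k * card (F S0)" .
      define E where "E = F S0"
      define r where "r = k * 2^k"
      have k1: "1 \<le> k" using t1 tk by linarith
      have r1: "1 \<le> r" unfolding r_def using k1 by simp
      have dens: "real n * (real n - k) \<le> real (card E) * real r"
      proof -
        have "real (card Q) \<le> real (2^k * card (F S0))" using QF by (simp only: of_nat_le_iff)
        then have "real (card Q) * k \<le> real (2^k * card (F S0)) * k" by (intro mult_right_mono) auto
        then show ?thesis using Qk unfolding E_def r_def by (simp add: algebra_simps)
      qed
      have EB: "E \<subseteq> B \<times> B" unfolding E_def F_def by auto
      have irr: "\<forall>x. (x,x) \<notin> E"
      proof (intro allI notI)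
        fix x assume "(x,x) \<in> E"
        then have "S0 \<subseteq> {}" unfolding E_def F_def using Nfxx by auto
        then show False using S0 t1 unfolding SS_def by auto
      qed
      have big: "(8*(k*2^k)*t)^(t+1) \<le> n"
        by (rule asym[OF h1 h2 _ m2 t1 tk km]) (use assms nB n_def in auto)
      then have big': "(8*r*t)^(t+1) \<le> n" unfolding r_def by simp
      have "2*k \<le> n"
      proof -
        have "k \<le> r" unfolding r_def by simp
        moreover have "r \<le> r*t" using t1 by simp
        ultimately have "2*k \<le> 8*r*t" by linarith
        moreover have "8*r*t \<le> (8*r*t)^(t+1)" using r1 t1
          by (intro self_le_power) auto
        ultimately show ?thesis using big' by linarith
      qed
      define D where "D = n div (4*r)"
      have Vd: "D \<le> card {y\<in>B. D \<le> card {x\<in>B. (x,y)\<in>E}}"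
        using degree[OF finB EB r1, of k D] \<open>2*k \<le> n\<close> dens D_def n_def by simp
      have num: "(t-1) * (card B choose t) < D * (D choose t)"
        using numeric[OF r1 t1 big' D_def] n_def by simp
      obtain T U where TU: "T \<subseteq> B" "U \<subseteq> B" "T \<inter> U = {}" "card T = t" "card U = t"
          "\<forall>x\<in>T. \<forall>y\<in>U. (x,y)\<in>E"
        using kst[OF finB EB irr t1 Vd num] by blast
      have "contains_complete_3partite H S0 T U"
        unfolding contains_complete_3partite_def
      proof (intro ballI)
        fix a x y assume "a \<in> S0" "x \<in> T" "y \<in> U"
        then have "S0 \<subseteq> Nf x y" using TU(6) unfolding E_def F_def by auto
        then show "{a,x,y} \<in> H" using \<open>a \<in> S0\<close> unfolding Nf_def by auto
      qed
      then show ?thesis using TU S0 unfolding SS_def t_def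
        by (intro exI[of _ S0] exI[of _ T] exI[of _ U]) auto
    qed
  qed
qed

end
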